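(* As formal power series in $q$ (with coefficients rational functions in $x$, in fact Laurent polynomials), $$\sum_{\lambda\in \mathcal{SC}} x^{n_1(\lambda)} \, q^{\vert\lambda\vert}= (-q;q^2)_{\infty}\left[\Big(1-\frac1x\Big)\sum_{n\geq0}\frac{(x^2-1)^nq^{2n^2+n}}{(q^2;q^2)_n(-q;q^2)_{n+1}}+\frac1x\sum_{n\geq0}\frac{(x^2-1)^nq^{2n^2-n}}{(q^2;q^2)_n(-q;q^2)_n}\right].$$
   Context: A partition is self-conjugate if its Young diagram is symmetric about the main diagonal; $\mathcal{SC}$ is the set of all self-conjugate partitions (including the empty partition of size $0$), and $|\lambda|$ is the size. The hook length of the cell $(i,j)$ is the number of cells to its right in row $i$ plus the number below it in column $j$ plus $1$; $n_1(\lambda)$ is the number of cells of $\lambda$ with hook length $1$. The $q$-Pochhammer symbol is $(a;q)_0=1$, $(a;q)_n=\prod_{j=0}^{n-1}(1-aq^j)$, $(a;q)_\infty=\prod_{j\ge0}(1-aq^j)$. *)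

theory Defs
  imports "HOL-Computational_Algebra.Formal_Power_Series"
begin

definition partition :: "nat list \<Rightarrow> bool" where
  "partition l \<longleftrightarrow> sorted_wrt (\<ge>) l \<and> (\<forall>p\<in>set l. 0 < p)"

definition psize :: "nat list \<Rightarrow> nat" where
  "psize l = sum_list l"

definition cells :: "nat list \<Rightarrow> (nat \<times> nat) set" where
  "cells l = {(i, j). i < length l \<and> j < l ! i}"

definition self_conjugate :: "nat list \<Rightarrow> bool" where
  "self_conjugate l \<longleftrightarrow> (\<forall>i j. (i, j) \<in> cells l \<longleftrightarrow> (j, i) \<in> cells l)"

definition hook_length :: "nat list \<Rightarrow> nat \<times> nat \<Rightarrow> nat" where
  "hook_length l c = card {j'. (fst c, j') \<in> cells l \<and> j' > snd c}
                   + card {i'. (i', snd c) \<in> cells l \<and> i' > fst c} + 1"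

definition n1 :: "nat list \<Rightarrow> nat" where
  "n1 l = card {c \<in> cells l. hook_length l c = 1}"

definition qpoch :: "'a::comm_ring_1 \<Rightarrow> 'a \<Rightarrow> nat \<Rightarrow> 'a" where
  "qpoch a q n = (\<Prod>j<n. 1 - a * q ^ j)"

text \<open>Infinite q-Pochhammer symbol for formal power series, as the limit of
  the finite products in the (X-adic) metric topology of fps.\<close>
definition qpoch_inf :: "'a::field fps \<Rightarrow> 'a fps \<Rightarrow> 'a fps" where
  "qpoch_inf a q = lim (\<lambda>n. qpoch a q n)"

definition SC_gf :: "'a::comm_ring_1 \<Rightarrow> 'a fps" where
  "SC_gf x = Abs_fps (\<lambda>m. \<Sum>l\<in>{l. partition l \<and> self_conjugate l \<and> psize l = m}. x ^ n1 l)"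

end

theory Submission
  imports Defs
begin

unbundle fps_syntax


definition sd :: "nat list \<Rightarrow> bool" where
  "sd xs \<longleftrightarrow> sorted_wrt (>) xs \<and> (\<forall>v\<in>set xs. 0 < v)"

fun g :: "nat list \<Rightarrow> nat list" where
  "g [] = []"
| "g (a # as) = a # map Suc (g as) @ replicate (a - Suc (length (g as))) 1"

function dec :: "nat list \<Rightarrow> nat list" where
  "dec [] = []"
| "dec (a # r) = a # dec (map (\<lambda>v. v - 1) (filter (\<lambda>v. 2 \<le> v) r))"
  by pat_completeness auto
termination by (relation "measure length") (auto simp: le_imp_less_Suc length_filter_le)

definition hb :: "nat list \<Rightarrow> nat" where "hb as = (case as of [] \<Rightarrow> 0 | b # _ \<Rightarrow> b)"

lemma sd_Nil[simp]: "sd []" by (simp add: sd_def)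

lemma sd_Cons: "sd (a # as) \<longleftrightarrow> (\<forall>v\<in>set as. v < a) \<and> 0 < a \<and> sd as"
  by (auto simp: sd_def)

lemma sd_le_hb: "sd as \<Longrightarrow> v \<in> set as \<Longrightarrow> v \<le> hb as"
  by (cases as) (auto simp: sd_Cons hb_def)

lemma g_bound: "sd as \<Longrightarrow> (\<forall>b\<in>set as. b \<le> m) \<Longrightarrow> \<forall>v\<in>set (g as). v \<le> m \<and> 0 < v"
proof (induction as arbitrary: m)
  case Nil then show ?case by simp
next
  case (Cons a as)
  have "\<forall>v\<in>set (g as). v \<le> a - 1 \<and> 0 < v"
    using Cons.prems by (intro Cons.IH) (auto simp: sd_Cons)
  then show ?case using Cons.prems by (auto simp: sd_Cons)
qed

lemma g_length: "sd as \<Longrightarrow> length (g as) = hb as"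
proof (induction as)
  case (Cons a as)
  then have "hb as < a" by (cases as) (auto simp: hb_def sd_Cons)
  with Cons show ?case by (auto simp: hb_def sd_Cons)
qed (simp add: hb_def)

lemma partition_Cons: "partition (a # l) \<longleftrightarrow> (\<forall>v\<in>set l. v \<le> a) \<and> 0 < a \<and> partition l"
  by (auto simp: partition_def)

lemma sorted_wrt_replicate': "R x x \<Longrightarrow> sorted_wrt R (replicate k x)"
  by (induction k) auto

lemma g_partition: "sd as \<Longrightarrow> partition (g as)"
proof (induction as)
  case Nil then show ?case by (simp add: partition_def)
next
  case (Cons a as)
  have sd: "sd as" and lt: "\<forall>v\<in>set as. v < a" "0<a" using Cons.prems by (auto simp: sd_Cons)
  have "\<forall>b\<in>set as. b \<le> a - 1" using lt by auto
  from g_bound[OF sd this] have b: "\<forall>v\<in>set (g as). v \<le> a - 1 \<and> 0 < v" .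
  have p: "partition (g as)" using Cons.IH sd by simp
  have s1: "sorted_wrt (\<ge>) (map Suc (g as))"
    using p unfolding partition_def by (auto intro: sorted_wrt_map_mono)
  have s2: "sorted_wrt (\<ge>) (replicate (a - Suc (length (g as))) (1::nat))"
    by (rule sorted_wrt_replicate') simp
  show ?case unfolding partition_def
    using s1 s2 b lt by (auto simp: sorted_wrt_append)
qed

lemma sum_list_map_Suc: "sum_list (map Suc xs) = sum_list xs + length xs"
  by (induction xs) auto

lemma g_sum: "sd as \<Longrightarrow> sum_list (g as) = (\<Sum>a\<leftarrow>as. 2*a - 1)"
proof (induction as)
  case (Cons a as)
  then have "hb as < a" by (cases as) (auto simp: hb_def sd_Cons)
  with Cons show ?case by (auto simp: sd_Cons g_length sum_list_map_Suc sum_list_replicate)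
qed simp

lemma mem_cells_Cons: "(i,j) \<in> cells (a#l) \<longleftrightarrow> (if i = 0 then j < a else (i-1, j) \<in> cells l)"
  by (cases i) (auto simp: cells_def)

lemma mem_cells_MR: "(i,j) \<in> cells (map Suc m @ replicate k 1) \<longleftrightarrow>
   (i < length m + k \<and> (j = 0 \<or> (0 < j \<and> (i, j-1) \<in> cells m)))"
  by (cases "i < length m") (auto simp: cells_def nth_append)

lemma cells_fst: "(i,j) \<in> cells l \<Longrightarrow> i < length l"
  by (simp add: cells_def)

lemma mem_cells_g: "sd (a # as) \<Longrightarrow> (i,j) \<in> cells (g (a#as)) \<longleftrightarrow>
   (if i = 0 then j < a else (i - 1 < a - 1 \<and> (j = 0 \<or> (0 < j \<and> (i-1, j-1) \<in> cells (g as)))))"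
proof -
  assume sd: "sd (a # as)"
  then have "hb as < a" by (cases as) (auto simp: hb_def sd_Cons)
  then have "length (g as) + (a - Suc (length (g as))) = a - 1"
    using sd by (auto simp: sd_Cons g_length)
  then show ?thesis
    by (simp only: g.simps mem_cells_Cons mem_cells_MR length_map)
qed

lemma g_sc: "sd as \<Longrightarrow> self_conjugate (g as)"
proof (induction as)
  case Nil then show ?case by (simp add: self_conjugate_def cells_def)
next
  case (Cons a as)
  have sd: "sd as" using Cons.prems by (simp add: sd_Cons)
  have IH: "\<And>i j. (i,j) \<in> cells (g as) \<longleftrightarrow> (j,i) \<in> cells (g as)"
    using Cons.IH[OF sd] by (simp add: self_conjugate_def)
  have hb: "hb as < a" "0 < a" using Cons.prems by (cases as; auto simp: hb_def sd_Cons)+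
  have L: "\<And>p q. (p,q) \<in> cells (g as) \<Longrightarrow> p < a - 1"
    using cells_fst g_length[OF sd] hb by fastforce
  show ?case unfolding self_conjugate_def
  proof (intro allI)
    fix i j
    show "(i, j) \<in> cells (g (a # as)) \<longleftrightarrow> (j, i) \<in> cells (g (a # as))"
      unfolding mem_cells_g[OF Cons.prems]
      using IH L hb by (auto dest: L)
  qed
qed

lemma dec_g: "sd as \<Longrightarrow> dec (g as) = as"
proof (induction as)
  case (Cons a as)
  have sd: "sd as" using Cons.prems by (simp add: sd_Cons)
  have "\<forall>b\<in>set as. b \<le> a" using Cons.prems by (auto simp: sd_Cons)
  from g_bound[OF sd this] have b: "\<forall>v\<in>set (g as). 0 < v" by blast
  have f: "filter (\<lambda>v. 2 \<le> v) (map Suc (g as)) = map Suc (g as)"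
    using b by (auto simp: filter_id_conv)
  have f2: "filter (\<lambda>v. 2 \<le> v) (replicate k (1::nat)) = []" for k
    by (induction k) auto
  show ?case using Cons.IH[OF sd] by (simp add: f f2 comp_def)
qed simp

lemma split_rest: "sorted_wrt (\<ge>) r \<Longrightarrow> \<forall>v\<in>set r. 0 < (v::nat) \<Longrightarrow>
  r = map Suc (map (\<lambda>v. v - 1) (filter (\<lambda>v. 2 \<le> v) r)) @ replicate (length r - length (filter (\<lambda>v. 2 \<le> v) r)) 1"
proof (induction r)
  case (Cons v r)
  show ?case
  proof (cases "2 \<le> v")
    case True
    with Cons show ?thesis by (simp add: Suc_diff_le length_filter_le)
  next
    case False
    then have v: "v = 1" using Cons.prems by auto
    then have all1: "\<forall>w\<in>set r. w = 1" using Cons.prems by fastforce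
    then have "filter (\<lambda>v. 2 \<le> v) r = []" by (auto simp: filter_empty_conv)
    moreover have "replicate (length r) 1 = r" using replicate_length_same[OF all1] .
    ultimately show ?thesis using v by simp
  qed
qed simp

lemma g_dec: "partition l \<Longrightarrow> self_conjugate l \<Longrightarrow> sd (dec l) \<and> g (dec l) = l"
proof (induction l rule: dec.induct)
  case 1 then show ?case by simp
next
  case (2 a r)
  define \<mu> where "\<mu> = map (\<lambda>v. v - 1) (filter (\<lambda>v. 2 \<le> v) r)"
  define k where "k = length r - length \<mu>"
  have pr: "partition r" "\<forall>v\<in>set r. v \<le> a" "0 < a" using "2.prems"(1) by (auto simp: partition_Cons)
  have r_eq: "r = map Suc \<mu> @ replicate k 1"
    unfolding \<mu>_def k_def using split_rest[of r] pr(1) by (simp add: partition_def)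
  have sc: "\<And>i j. (i,j) \<in> cells (a # r) \<longleftrightarrow> (j,i) \<in> cells (a # r)"
    using "2.prems"(2) by (simp add: self_conjugate_def)
  have col: "(j, 0) \<in> cells (a # r) \<longleftrightarrow> j < Suc (length r)" for j
    using pr(1) pr(3) by (cases j) (auto simp: cells_def partition_def)
  have row: "(0, j) \<in> cells (a # r) \<longleftrightarrow> j < a" for j
    by (simp add: cells_def)
  have alen: "a = Suc (length r)"
  proof -
    have e: "j < a \<longleftrightarrow> j < Suc (length r)" for j using sc[of 0 j] col[of j] row[of j] by simp
    show ?thesis using e[of a] e[of "Suc (length r)"] by linarith
  qed
  have lenmu: "length \<mu> \<le> length r" unfolding \<mu>_def by (simp add: length_filter_le)
  have pmu: "partition \<mu>"
    unfolding \<mu>_def partition_def using pr(1)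
    by (auto simp: partition_def intro!: sorted_wrt_map_mono sorted_wrt_filter)
  have cmu: "(i,j) \<in> cells \<mu> \<longleftrightarrow> (Suc i, Suc j) \<in> cells (a # r)" for i j
    unfolding r_eq mem_cells_Cons mem_cells_MR using cells_fst[of i j \<mu>] by auto
  have scmu: "self_conjugate \<mu>"
    unfolding self_conjugate_def using cmu sc by blast
  from "2.IH"[folded \<mu>_def, OF pmu scmu]
  have IH: "sd (dec \<mu>)" "g (dec \<mu>) = \<mu>" by auto
  have hbl: "hb (dec \<mu>) = length \<mu>" using g_length[OF IH(1)] IH(2) by simp
  have dl: "dec (a # r) = a # dec \<mu>" by (simp add: \<mu>_def)
  have "sd (a # dec \<mu>)"
    unfolding sd_Cons using IH(1) pr(3) sd_le_hb[OF IH(1)] hbl lenmu alen by fastforce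
  moreover have "g (a # dec \<mu>) = a # r"
  proof -
    have kk: "a - Suc (length \<mu>) = k" using IH(2) alen lenmu by (simp add: k_def)
    show ?thesis by (subst r_eq) (simp only: g.simps kk IH(2))
  qed
  ultimately show ?case using dl by simp
qed


lemma part_nth_mono: "partition l \<Longrightarrow> i \<le> i' \<Longrightarrow> i' < length l \<Longrightarrow> l ! i' \<le> l ! i"
  unfolding partition_def
  using sorted_wrt_nth_less[of "\<lambda>x y. y \<le> x" l i i'] by (cases "i = i'") auto

lemma part_pos: "partition l \<Longrightarrow> i < length l \<Longrightarrow> 0 < l ! i"
  unfolding partition_def by auto

lemma hook_one:
  assumes p: "partition l" and c: "(i,j) \<in> cells l"
  shows "hook_length l (i,j) = 1 \<longleftrightarrow> Suc j = l!i \<and> (Suc i = length l \<or> l!Suc i < l!i)"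
proof -
  have i: "i < length l" "j < l!i" using c by (auto simp: cells_def)
  have A: "{j'. (i,j') \<in> cells l \<and> j' > j} = {Suc j..<l!i}" using i by (auto simp: cells_def)
  define B where "B = {i'. (i',j) \<in> cells l \<and> i' > i}"
  have finB: "finite B" unfolding B_def by (rule finite_subset[of _ "{..<length l}"]) (auto simp: cells_def)
  have Be: "B = {} \<longleftrightarrow> \<not> (Suc i < length l \<and> j < l ! Suc i)"
  proof
    assume "B = {}"
    then show "\<not> (Suc i < length l \<and> j < l ! Suc i)" by (auto simp: B_def cells_def)
  next
    assume n: "\<not> (Suc i < length l \<and> j < l ! Suc i)"
    show "B = {}"
    proof (rule ccontr)
      assume "B \<noteq> {}"
      then obtain i' where i': "i < i'" "i' < length l" "j < l ! i'" by (auto simp: B_def cells_def)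
      have "l ! i' \<le> l ! Suc i" using part_nth_mono[OF p, of "Suc i" i'] i' by auto
      then show False using n i' by auto
    qed
  qed
  have h: "hook_length l (i,j) = (l!i - Suc j) + card B + 1"
    unfolding hook_length_def B_def by (simp add: A)
  have cB: "card B = 0 \<longleftrightarrow> B = {}" using finB by simp
  have "hook_length l (i,j) = 1 \<longleftrightarrow> Suc j = l!i \<and> B = {}"
    using h i cB by auto
  also have "\<dots> \<longleftrightarrow> Suc j = l!i \<and> (Suc i = length l \<or> l!Suc i < l!i)"
    using Be i by auto
  finally show ?thesis .
qed

lemma n1_eq: assumes p: "partition l" shows "n1 l = card (set l)"
proof -
  define I where "I = {i. i < length l \<and> (Suc i = length l \<or> l!Suc i < l!i)}"
  have E: "{c \<in> cells l. hook_length l c = 1} = (\<lambda>i. (i, l!i - 1)) ` I"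
  proof safe
    fix i j assume c: "(i,j) \<in> cells l" "hook_length l (i,j) = 1"
    then have "Suc j = l!i" "Suc i = length l \<or> l!Suc i < l!i" using hook_one[OF p c(1)] by auto
    moreover have "i < length l" using c by (simp add: cells_def)
    ultimately show "(i,j) \<in> (\<lambda>i. (i, l!i - 1)) ` I" unfolding I_def by force
  next
    fix i assume i: "i \<in> I"
    then have il: "i < length l" by (simp add: I_def)
    have pos: "0 < l!i" using part_pos[OF p il] .
    show c: "(i, l!i - 1) \<in> cells l" using il pos by (simp add: cells_def)
    show "hook_length l (i, l!i - 1) = 1" using hook_one[OF p c] pos i by (simp add: I_def)
  qed
  have inj: "inj_on (\<lambda>i. (i, l!i - 1)) I" by (rule inj_onI) auto
  have bij: "bij_betw (nth l) I (set l)"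
  proof (rule bij_betw_imageI)
    show "inj_on (nth l) I"
    proof (rule inj_onI)
      fix i i' assume ii: "i \<in> I" "i' \<in> I" "l ! i = l ! i'"
      show "i = i'"
      proof (rule ccontr)
        assume ne: "i \<noteq> i'"
        have lt: "\<And>a b. a \<in> I \<Longrightarrow> b \<in> I \<Longrightarrow> a < b \<Longrightarrow> l ! b < l ! a"
        proof -
          fix a b assume ab: "a \<in> I" "b \<in> I" "a < b"
          then have "Suc a < length l" by (auto simp: I_def)
          then have "l ! Suc a < l ! a" using ab by (auto simp: I_def)
          moreover have "l ! b \<le> l ! Suc a" using part_nth_mono[OF p, of "Suc a" b] ab by (auto simp: I_def)
          ultimately show "l ! b < l ! a" by simp
        qed
        show False using lt[of i i'] lt[of i' i] ii ne by (cases "i < i'") auto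
      qed
    qed
  next
    show "nth l ` I = set l"
    proof safe
      fix i assume "i \<in> I" then show "l ! i \<in> set l" by (simp add: I_def)
    next
      fix v assume v: "v \<in> set l"
      define J where "J = {i. i < length l \<and> l ! i = v}"
      have finJ: "finite J" unfolding J_def by simp
      have neJ: "J \<noteq> {}" using v by (auto simp: J_def in_set_conv_nth)
      define i where "i = Max J"
      have iJ: "i \<in> J" unfolding i_def using finJ neJ by (rule Max_in)
      have mx: "\<And>k. k \<in> J \<Longrightarrow> k \<le> i" unfolding i_def using finJ by simp
      have "i \<in> I"
      proof -
        have il: "i < length l" "l ! i = v" using iJ by (auto simp: J_def)
        have "Suc i = length l \<or> l ! Suc i < l ! i"
        proof (cases "Suc i < length l")
          case True
          have "l ! Suc i \<noteq> v" using mx[of "Suc i"] True by (auto simp: J_def)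
          moreover have "l ! Suc i \<le> l ! i" using part_nth_mono[OF p, of i "Suc i"] True by simp
          ultimately show ?thesis using il by auto
        qed (use il in auto)
        then show ?thesis using il by (simp add: I_def)
      qed
      then show "v \<in> nth l ` I" using iJ by (auto simp: J_def)
    qed
  qed
  have "n1 l = card ((\<lambda>i. (i, l!i - 1)) ` I)" unfolding n1_def E ..
  also have "\<dots> = card I" using inj by (rule card_image)
  also have "\<dots> = card (set l)" using bij by (rule bij_betw_same_card)
  finally show ?thesis .
qed

definition ntop :: "nat set \<Rightarrow> nat" where "ntop A = card {a\<in>A. Suc a \<notin> A}"

lemma ntop_insert_max:
  assumes fin: "finite B" and lt: "\<forall>v\<in>B. v < a" and a: "0 < a"
  shows "ntop (insert a B) = (if a - 1 \<in> B then ntop B else Suc (ntop B))"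
proof -
  define T where "T = {c\<in>B. Suc c \<notin> B}"
  have finT: "finite T" using fin by (simp add: T_def)
  have aB: "a \<notin> B" "Suc a \<notin> B" using lt by auto
  have E: "{c \<in> insert a B. Suc c \<notin> insert a B} = insert a (T - {a - 1})"
    using aB a by (auto simp: T_def)
  show ?thesis
  proof (cases "a - 1 \<in> B")
    case True
    then have "a - 1 \<in> T" using a aB by (simp add: T_def)
    moreover have "a \<notin> T" using aB by (simp add: T_def)
    ultimately show ?thesis using True finT unfolding ntop_def E T_def[symmetric]
      by (simp add: card_insert_if card_Diff_singleton) (metis card_0_eq empty_iff finT Suc_pred neq0_conv)
  next
    case False
    then have "T - {a - 1} = T" by (auto simp: T_def)
    moreover have "a \<notin> T" using aB by (simp add: T_def)
    ultimately show ?thesis using False finT unfolding ntop_def E T_def[symmetric]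
      by simp
  qed
qed

lemma card_set_g: "sd as \<Longrightarrow> card (set (g as)) + (if 1 \<in> set as then 1 else 0) = 2 * ntop (set as)"
proof (induction as)
  case Nil then show ?case by (simp add: ntop_def)
next
  case (Cons a as)
  have sd: "sd as" and lt: "\<forall>v\<in>set as. v < a" and a0: "0 < a" using Cons.prems by (auto simp: sd_Cons)
  have IH: "card (set (g as)) + (if 1 \<in> set as then 1 else 0) = 2 * ntop (set as)"
    using Cons.IH sd by simp
  show ?case
  proof (cases as)
    case Nil
    have "{c \<in> {a}. Suc c \<notin> {a}} = {a}" by auto
    then have "ntop {a} = 1" unfolding ntop_def by simp
    then show ?thesis using a0 Nil by (cases "a = 1") auto
  next
    case (Cons b bs)
    have ba: "b < a" "b \<in> set as" using lt Cons by auto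
    have b1: "0 < b" using sd Cons by (simp add: sd_Cons)
    have hb: "hb as = b" using Cons by (simp add: hb_def)
    have bnd: "\<forall>v\<in>set (g as). v \<le> b \<and> 0 < v"
      using g_bound[OF sd, of b] sd_le_hb[OF sd] hb by auto
    have bg: "b \<in> set (g as)" using Cons by simp
    define k where "k = a - Suc b"
    have sg: "set (g (a # as)) = insert a (Suc ` set (g as) \<union> (if k = 0 then {} else {1}))"
      using g_length[OF sd] hb by (auto simp: k_def)
    have aS: "a \<in> Suc ` set (g as) \<longleftrightarrow> a = Suc b"
      using bnd bg ba by force
    have one: "1 \<notin> Suc ` set (g as)" using bnd by auto
    have cS: "card (Suc ` set (g as)) = card (set (g as))" by (simp add: card_image)
    have c1: "card (set (g (a # as))) = card (set (g as)) + (if a = Suc b then 0 else 2)"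
    proof (cases "a = Suc b")
      case True
      then have "k = 0" by (simp add: k_def)
      then show ?thesis using sg aS True cS by (simp add: insert_absorb)
    next
      case False
      then have "k \<noteq> 0" "a \<noteq> 1" using ba by (auto simp: k_def)
      then show ?thesis using sg aS False cS one by (simp add: card_insert_if)
    qed
    have one': "1 \<in> set (a # as) \<longleftrightarrow> 1 \<in> set as" using ba b1 by auto
    have am1: "a - 1 \<in> set as \<longleftrightarrow> a = Suc b"
      using sd_le_hb[OF sd] hb ba by force
    have nt: "ntop (set (a # as)) = (if a = Suc b then ntop (set as) else Suc (ntop (set as)))"
      using ntop_insert_max[of "set as" a] lt a0 am1 by simp
    show ?thesis using IH c1 one' nt by simp
  qed
qed


definition F :: "nat \<Rightarrow> nat \<Rightarrow> nat set set" where
  "F j m = {A \<in> Pow {Suc j..m}. (\<Sum>a\<in>A. 2*a - 1) = m}"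

lemma finite_F[simp]: "finite (F j m)"
  unfolding F_def by simp

definition GG :: "nat set \<Rightarrow> nat list" where "GG A = g (rev (sorted_list_of_set A))"

lemma sd_rev_sls: "finite A \<Longrightarrow> 0 \<notin> A \<Longrightarrow> sd (rev (sorted_list_of_set A))"
  unfolding sd_def using strict_sorted_list_of_set[of A]
  by (auto simp: sorted_wrt_rev) (metis gr0I)

lemma sd_distinct: "sd xs \<Longrightarrow> distinct xs"
proof -
  assume "sd xs"
  then have "sorted_wrt (<) (rev xs)" by (simp add: sd_def sorted_wrt_rev)
  then show "distinct xs" by (simp add: strict_sorted_iff)
qed

lemma rev_sls_sd: "sd xs \<Longrightarrow> rev (sorted_list_of_set (set xs)) = xs"
proof -
  assume s: "sd xs"
  then have "sorted_wrt (<) (rev xs)" by (simp add: sd_def sorted_wrt_rev)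
  then have "sorted (rev xs)" "distinct (rev xs)" by (simp_all add: strict_sorted_iff)
  then have "sorted_list_of_set (set (rev xs)) = rev xs"
    by (rule sorted_list_of_set.idem_if_sorted_distinct)
  then show ?thesis by simp
qed

lemma sum_list_sd: "sd xs \<Longrightarrow> (\<Sum>a\<leftarrow>xs. f a) = (\<Sum>a\<in>set xs. f a)"
  using sd_distinct sum_list_distinct_conv_sum_set by blast

lemma SC_coeff:
  fixes x :: "'a::field"
  assumes x: "x \<noteq> 0"
  shows "SC_gf x $ m = (\<Sum>A\<in>F 0 m. if 1 \<in> A then x^(2*ntop A) / x else x^(2*ntop A))"
proof -
  define T where "T = {l. partition l \<and> self_conjugate l \<and> psize l = m}"
  have "SC_gf x $ m = (\<Sum>l\<in>T. x ^ n1 l)" by (simp add: SC_gf_def T_def)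
  also have "\<dots> = (\<Sum>A\<in>F 0 m. if 1 \<in> A then x^(2*ntop A) / x else x^(2*ntop A))"
  proof (rule sym, rule sum.reindex_bij_witness[of _ "\<lambda>l. set (dec l)" "\<lambda>A. GG A"], goal_cases)
    case (1 A)
    then have fin: "finite A" and A0: "0 \<notin> A" by (auto simp: F_def dest: finite_subset)
    then show ?case unfolding GG_def using dec_g[OF sd_rev_sls[OF fin A0]] by simp
  next
    case (2 A)
    then have fin: "finite A" and A0: "0 \<notin> A" and sA: "(\<Sum>a\<in>A. 2*a - 1) = m"
      by (auto simp: F_def dest: finite_subset)
    have sd: "sd (rev (sorted_list_of_set A))" using sd_rev_sls[OF fin A0] .
    have "psize (GG A) = m"
      unfolding psize_def GG_def g_sum[OF sd] sum_list_sd[OF sd] using fin sA by simp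
    then show ?case using g_partition[OF sd] g_sc[OF sd] by (simp add: T_def GG_def)
  next
    case (3 l)
    then have p: "partition l" "self_conjugate l" by (auto simp: T_def)
    show ?case unfolding GG_def using g_dec[OF p] rev_sls_sd by simp
  next
    case (4 l)
    then have p: "partition l" "self_conjugate l" "psize l = m" by (auto simp: T_def)
    have sd: "sd (dec l)" and gl: "g (dec l) = l" using g_dec[OF p(1,2)] by auto
    have sm: "(\<Sum>a\<in>set (dec l). 2*a - 1) = m"
      using p(3) g_sum[OF sd] sum_list_sd[OF sd, of "\<lambda>a. 2*a - 1"] gl by (simp add: psize_def)
    have pos: "\<forall>a\<in>set (dec l). 0 < a" using sd by (simp add: sd_def)
    have "a \<le> m" if "a \<in> set (dec l)" for a
    proof -
      have "2*a - 1 \<le> (\<Sum>a\<in>set (dec l). 2*a - 1)"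
        by (rule member_le_sum) (use that in auto)
      then show ?thesis using sm pos that by auto
    qed
    then show ?case using pos sm by (auto simp: F_def Suc_le_eq)
  next
    case (5 A)
    then have fin: "finite A" and A0: "0 \<notin> A" by (auto simp: F_def dest: finite_subset)
    have sd: "sd (rev (sorted_list_of_set A))" using sd_rev_sls[OF fin A0] .
    have n: "n1 (GG A) + (if 1 \<in> A then 1 else 0) = 2 * ntop A"
      using card_set_g[OF sd] n1_eq[OF g_partition[OF sd]] fin by (simp add: GG_def)
    show ?case
    proof (cases "1 \<in> A")
      case True
      then have "x ^ (2 * ntop A) = x ^ n1 (GG A) * x" using n by (simp flip: power_Suc2)
      then show ?thesis using True x by simp
    next
      case False
      then show ?thesis using n by simp
    qed
  qed
  finally show ?thesis .
qed

definition hc :: "'a::comm_ring_1 \<Rightarrow> nat \<Rightarrow> 'a fps" where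
  "hc x j = Abs_fps (\<lambda>m. \<Sum>A\<in>F j m. x ^ (2 * ntop A))"

lemma F_sub: "F (Suc j) m = {A \<in> F j m. Suc j \<notin> A}"
proof -
  have "A \<subseteq> {Suc (Suc j)..m} \<longleftrightarrow> A \<subseteq> {Suc j..m} \<and> Suc j \<notin> A" for A
    by (auto simp: subset_iff) (metis le_antisym not_less_eq_eq)+
  then show ?thesis unfolding F_def by auto
qed

lemma SC_hc:
  fixes x :: "'a::field"
  assumes x: "x \<noteq> 0"
  shows "SC_gf x = hc x 1 + fps_const (1/x) * (hc x 0 - hc x 1)"
proof (rule fps_ext)
  fix m
  have sub: "F 1 m \<subseteq> F 0 m" using F_sub[of 0 m] by auto
  have d: "F 0 m - F 1 m = {A \<in> F 0 m. 1 \<in> A}" using F_sub[of 0 m] by auto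
  have "SC_gf x $ m = (\<Sum>A\<in>F 0 m \<inter> {A. 1 \<in> A}. x^(2*ntop A) / x) + (\<Sum>A\<in>F 0 m \<inter> - {A. 1 \<in> A}. x^(2*ntop A))"
    unfolding SC_coeff[OF x] by (rule sum.If_cases) simp
  also have "F 0 m \<inter> - {A. 1 \<in> A} = F 1 m" using F_sub[of 0 m] by auto
  also have "F 0 m \<inter> {A. 1 \<in> A} = F 0 m - F 1 m" using d by auto
  also have "(\<Sum>A\<in>F 0 m - F 1 m. x^(2*ntop A) / x) = (\<Sum>A\<in>F 0 m - F 1 m. x^(2*ntop A)) / x"
    by (simp add: sum_divide_distrib)
  also have "(\<Sum>A\<in>F 0 m - F 1 m. x^(2*ntop A)) = (\<Sum>A\<in>F 0 m. x^(2*ntop A)) - (\<Sum>A\<in>F 1 m. x^(2*ntop A))"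
    by (rule sum_diff[OF _ sub]) simp
  finally show "SC_gf x $ m = (hc x 1 + fps_const (1/x) * (hc x 0 - hc x 1)) $ m"
    by (simp add: hc_def add.commute)
qed

lemma ntop_insert_min:
  assumes fin: "finite B" and gt: "\<forall>v\<in>B. s < v"
  shows "ntop (insert s B) = (if Suc s \<in> B then ntop B else Suc (ntop B))"
proof -
  define T where "T = {c\<in>B. Suc c \<notin> B}"
  have finT: "finite T" using fin by (simp add: T_def)
  have sT: "s \<notin> T" using gt by (auto simp: T_def)
  have E: "{c \<in> insert s B. Suc c \<notin> insert s B} = (if Suc s \<in> B then T else insert s T)"
    using gt by (auto simp: T_def)
  show ?thesis unfolding ntop_def E T_def[symmetric] using finT sT by simp
qed

lemma F_with:
  assumes e: "2*j+1 \<le> m"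
  shows "{A \<in> F j m. Suc j \<in> A} = insert (Suc j) ` F (Suc j) (m - (2*j+1))"
proof safe
  fix A assume A: "A \<in> F j m" "Suc j \<in> A"
  have fin: "finite A" using A by (auto simp: F_def dest: finite_subset)
  have hsum: "(\<Sum>a\<in>A. 2*a - 1) = Suc (2*j) + (\<Sum>a\<in>A - {Suc j}. 2*a - 1)"
    using A(2) fin by (simp add: sum.remove)
  have sA: "(\<Sum>a\<in>A. 2*a - 1) = m" using A by (simp add: F_def)
  have "(\<Sum>a\<in>A - {Suc j}. 2*a - 1) = m - (2*j+1)" using hsum sA by arith
  moreover have "A - {Suc j} \<subseteq> {Suc (Suc j)..m - (2*j+1)}"
  proof
    fix a assume a: "a \<in> A - {Suc j}"
    then have "a \<ge> Suc (Suc j)" using A by (auto simp: F_def)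
    moreover have "2*a - 1 \<le> (\<Sum>a\<in>A - {Suc j}. 2*a - 1)"
      by (rule member_le_sum) (use a fin in auto)
    ultimately show "a \<in> {Suc (Suc j)..m - (2*j+1)}" using \<open>(\<Sum>a\<in>A - {Suc j}. 2*a - 1) = m - (2*j+1)\<close> by auto
  qed
  ultimately have "A - {Suc j} \<in> F (Suc j) (m - (2*j+1))" by (simp add: F_def)
  then show "A \<in> insert (Suc j) ` F (Suc j) (m - (2*j+1))"
    using A(2) by (metis image_eqI insert_Diff)
next
  fix B assume B: "B \<in> F (Suc j) (m - (2*j+1))"
  have fin: "finite B" using B by (auto simp: F_def dest: finite_subset)
  have nb: "Suc j \<notin> B" using B by (auto simp: F_def)
  have hs: "(\<Sum>a\<in>insert (Suc j) B. 2*a - 1) = Suc (2*j) + (\<Sum>a\<in>B. 2*a - 1)"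
    using fin nb by simp
  have Bs: "B \<subseteq> {Suc (Suc j)..m - (2*j+1)}" and sB: "(\<Sum>a\<in>B. 2*a - 1) = m - (2*j+1)"
    using B by (simp_all add: F_def)
  have "insert (Suc j) B \<subseteq> {Suc j..m}" using Bs e by (auto simp: subset_iff)
  moreover have "(\<Sum>a\<in>insert (Suc j) B. 2*a - 1) = m" using hs sB e by simp
  ultimately show "insert (Suc j) B \<in> F j m" by (simp add: F_def)
qed

lemma inj_insert_F: "inj_on (insert (Suc j)) (F (Suc j) m')"
proof (rule inj_onI)
  fix A B assume AB: "A \<in> F (Suc j) m'" "B \<in> F (Suc j) m'" "insert (Suc j) A = insert (Suc j) B"
  moreover have "Suc j \<notin> A" "Suc j \<notin> B" using AB by (auto simp: F_def)
  ultimately show "A = B" by (metis Diff_insert_absorb)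
qed

lemma hc_rec:
  fixes x :: "'a::comm_ring_1"
  shows "hc x j = (1 + fps_X ^ (2*j+1)) * hc x (Suc j) + fps_const (x^2 - 1) * fps_X ^ (2*j+1) * hc x (Suc (Suc j))"
proof (rule fps_ext)
  fix m
  define e where "e = 2*j+1"
  have split: "F j m = F (Suc j) m \<union> {A \<in> F j m. Suc j \<in> A}" using F_sub[of j m] by auto
  have disj: "F (Suc j) m \<inter> {A \<in> F j m. Suc j \<in> A} = {}" using F_sub[of j m] by auto
  have L: "hc x j $ m = hc x (Suc j) $ m + (\<Sum>A\<in>{A \<in> F j m. Suc j \<in> A}. x ^ (2 * ntop A))"
    unfolding hc_def fps_nth_Abs_fps
    by (subst split, subst sum.union_disjoint) (use disj in auto)
  show "hc x j $ m = ((1 + fps_X ^ (2*j+1)) * hc x (Suc j) + fps_const (x^2 - 1) * fps_X ^ (2*j+1) * hc x (Suc (Suc j))) $ m"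
  proof (cases "e \<le> m")
    case False
    then have "{A \<in> F j m. Suc j \<in> A} = {}"
    proof -
      have "False" if A: "A \<in> F j m" "Suc j \<in> A" for A
      proof -
        have "finite A" using A by (auto simp: F_def dest: finite_subset)
        then have "2 * Suc j - 1 \<le> (\<Sum>a\<in>A. 2*a - 1)"
          using member_le_sum[of "Suc j" A "\<lambda>a. 2*a-1"] A(2) by simp
        then show False using A False by (auto simp: F_def e_def)
      qed
      then show ?thesis by blast
    qed
    then have L2: "hc x j $ m = hc x (Suc j) $ m" using L by (simp only: sum.empty) simp
    have "((1 + fps_X ^ (2*j+1)) * hc x (Suc j) + fps_const (x^2 - 1) * fps_X ^ (2*j+1) * hc x (Suc (Suc j))) $ m = hc x (Suc j) $ m"
      using False by (simp add: distrib_right fps_X_power_mult_nth mult.assoc e_def; arith)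
    then show ?thesis using L2 by simp
  next
    case True
    define m' where "m' = m - e"
    have S: "(\<Sum>A\<in>{A \<in> F j m. Suc j \<in> A}. x ^ (2 * ntop A)) =
             (\<Sum>B\<in>F (Suc j) m'. x ^ (2 * ntop (insert (Suc j) B)))"
      unfolding F_with[OF True[unfolded e_def]] m'_def e_def
      by (rule sum.reindex[OF inj_insert_F, unfolded comp_def])
    have nt: "x ^ (2 * ntop (insert (Suc j) B)) = x ^ (2 * ntop B) + (if Suc (Suc j) \<in> B then 0 else (x^2 - 1) * x ^ (2 * ntop B))"
      if "B \<in> F (Suc j) m'" for B
    proof -
      have "finite B" "\<forall>v\<in>B. Suc j < v" using that by (auto simp: F_def dest: finite_subset)
      then show ?thesis using ntop_insert_min[of B "Suc j"]
        by (simp add: algebra_simps power2_eq_square)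
    qed
    have S2: "(\<Sum>B\<in>F (Suc j) m'. x ^ (2 * ntop (insert (Suc j) B))) =
         (\<Sum>B\<in>F (Suc j) m'. x ^ (2 * ntop B)) + (x^2 - 1) * (\<Sum>B\<in>F (Suc (Suc j)) m'. x ^ (2 * ntop B))"
    proof -
      have "(\<Sum>B\<in>F (Suc j) m'. x ^ (2 * ntop (insert (Suc j) B))) =
         (\<Sum>B\<in>F (Suc j) m'. x ^ (2 * ntop B)) + (\<Sum>B\<in>F (Suc j) m'. if Suc (Suc j) \<in> B then 0 else (x^2 - 1) * x ^ (2 * ntop B))"
        by (simp add: nt sum.distrib cong: sum.cong)
      also have "(\<Sum>B\<in>F (Suc j) m'. if Suc (Suc j) \<in> B then 0 else (x^2 - 1) * x ^ (2 * ntop B)) =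
          (\<Sum>B\<in>{B \<in> F (Suc j) m'. Suc (Suc j) \<notin> B}. (x^2 - 1) * x ^ (2 * ntop B))"
        by (subst sum.inter_filter) (auto intro: sum.cong)
      also have "{B \<in> F (Suc j) m'. Suc (Suc j) \<notin> B} = F (Suc (Suc j)) m'" using F_sub[of "Suc j" m'] by simp
      finally show ?thesis by (simp add: sum_distrib_left)
    qed
    show ?thesis using L S S2 True
      by (simp add: distrib_right fps_X_power_mult_nth mult.assoc e_def m'_def hc_def)
  qed
qed

lemma hc_low:
  assumes "m < 2*j+1"
  shows "hc x j $ m = (1::'a::comm_ring_1 fps) $ m"
proof (cases "m = 0")
  case True
  then have "F j m = {{}}" by (auto simp: F_def)
  then show ?thesis using True by (simp add: hc_def ntop_def)
next
  case False
  have "F j m = {}"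
  proof -
    have "False" if A: "A \<in> F j m" for A
    proof -
      have fin: "finite A" using A by (auto simp: F_def dest: finite_subset)
      have "A \<noteq> {}" using A False by (auto simp: F_def)
      then obtain a where a: "a \<in> A" by blast
      then have "Suc j \<le> a" using A by (auto simp: F_def)
      moreover have "2*a - 1 \<le> (\<Sum>a\<in>A. 2*a - 1)" by (rule member_le_sum) (use a fin in auto)
      ultimately show False using A assms by (auto simp: F_def)
    qed
    then show ?thesis by blast
  qed
  then show ?thesis using False by (simp add: hc_def)
qed


lemma fps_tendsto_add:
  fixes f g :: "'b \<Rightarrow> 'a::comm_ring_1 fps"
  assumes "(f \<longlongrightarrow> a) FF" "(g \<longlongrightarrow> b) FF"
  shows "((\<lambda>x. f x + g x) \<longlongrightarrow> a + b) FF"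
proof (rule tendsto_fpsI)
  fix n
  have "eventually (\<lambda>x. f x $ n = a $ n) FF" "eventually (\<lambda>x. g x $ n = b $ n) FF"
    using assms by (auto simp: tendsto_fps_iff)
  then show "eventually (\<lambda>x. (f x + g x) $ n = (a + b) $ n) FF"
    by eventually_elim simp
qed

lemma fps_tendsto_cmult:
  fixes f :: "'b \<Rightarrow> 'a::comm_ring_1 fps"
  assumes "(f \<longlongrightarrow> a) FF"
  shows "((\<lambda>x. c * f x) \<longlongrightarrow> c * a) FF"
proof (rule tendsto_fpsI)
  fix n
  have "\<forall>k\<in>{..n}. eventually (\<lambda>x. f x $ k = a $ k) FF"
    using assms by (auto simp: tendsto_fps_iff)
  then have "eventually (\<lambda>x. \<forall>k\<in>{..n}. f x $ k = a $ k) FF"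
    by (rule eventually_ball_finite[rotated]) simp
  then show "eventually (\<lambda>x. (c * f x) $ n = (c * a) $ n) FF"
  proof eventually_elim
    case (elim x)
    then show ?case unfolding fps_mult_nth by (intro sum.cong) auto
  qed
qed

lemma fps_sums_add:
  fixes f g :: "nat \<Rightarrow> 'a::comm_ring_1 fps"
  shows "f sums a \<Longrightarrow> g sums b \<Longrightarrow> (\<lambda>n. f n + g n) sums (a + b)"
  unfolding sums_def by (simp add: sum.distrib fps_tendsto_add)

lemma fps_sums_cmult:
  fixes f :: "nat \<Rightarrow> 'a::comm_ring_1 fps"
  shows "f sums a \<Longrightarrow> (\<lambda>n. c * f n) sums (c * a)"
  unfolding sums_def by (simp add: sum_distrib_left[symmetric] fps_tendsto_cmult)

lemma fps_sums_shift:
  fixes f :: "nat \<Rightarrow> 'a::comm_ring_1 fps"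
  assumes "f 0 = 0" "(\<lambda>n. f (Suc n)) sums s"
  shows "f sums s"
proof -
  have "(\<lambda>n. \<Sum>i<Suc n. f i) = (\<lambda>n. \<Sum>i<n. f (Suc i))"
    using assms(1) by (simp add: sum.lessThan_Suc_shift del: sum.lessThan_Suc)
  then have "(\<lambda>n. \<Sum>i<Suc n. f i) \<longlonglongrightarrow> s" using assms(2) by (simp add: sums_def)
  then show ?thesis unfolding sums_def by (rule filterlim_sequentially_Suc[THEN iffD1])
qed

lemma fps_sums_low:
  fixes f :: "nat \<Rightarrow> 'a::comm_ring_1 fps"
  assumes low: "\<And>n k. k < n \<Longrightarrow> f n $ k = 0"
  shows "f sums Abs_fps (\<lambda>k. \<Sum>n\<le>k. f n $ k)"
  unfolding sums_def
proof (rule tendsto_fpsI)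
  fix k
  have "eventually (\<lambda>N. N \<ge> Suc k) sequentially" by (rule eventually_ge_at_top)
  then show "eventually (\<lambda>N. (\<Sum>i<N. f i) $ k = Abs_fps (\<lambda>k. \<Sum>n\<le>k. f n $ k) $ k) sequentially"
  proof eventually_elim
    case (elim N)
    have "(\<Sum>i<N. f i) $ k = (\<Sum>i<N. f i $ k)" by (simp add: fps_sum_nth)
    also have "\<dots> = (\<Sum>i\<le>k. f i $ k)"
    proof (rule sum.mono_neutral_right)
      show "{..k} \<subseteq> {..<N}" using elim by auto
    qed (auto simp: low)
    finally show ?case by simp
  qed
qed

abbreviation qp1 :: "nat \<Rightarrow> 'a::field fps" where "qp1 n \<equiv> qpoch (- fps_X) (fps_X ^ 2) n"
abbreviation qp2 :: "nat \<Rightarrow> 'a::field fps" where "qp2 n \<equiv> qpoch (fps_X ^ 2) (fps_X ^ 2) n"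

lemma X2pow: "((fps_X :: 'a::comm_ring_1 fps) ^ 2) ^ n = fps_X ^ (2*n)"
  by (simp add: power_mult)

lemma qp1_Suc: "(qp1 (Suc n) :: 'a::field fps) = qp1 n * (1 + fps_X ^ (2*n+1))"
proof -
  have "1 - (- fps_X) * ((fps_X :: 'a fps) ^ 2) ^ n = 1 + fps_X ^ (2*n+1)"
    by (simp add: X2pow power_add mult.commute)
  then show ?thesis by (simp add: qpoch_def)
qed

lemma qp2_Suc: "(qp2 (Suc n) :: 'a::field fps) = qp2 n * (1 - fps_X ^ (2*n+2))"
proof -
  have "1 - (fps_X ^ 2) * ((fps_X :: 'a fps) ^ 2) ^ n = 1 - fps_X ^ (2*n+2)"
    by (metis X2pow power_add add.commute)
  then show ?thesis by (simp add: qpoch_def)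
qed

lemma qp1_0: "(qp1 n :: 'a::field fps) $ 0 = 1"
  by (induction n) (simp_all add: qp1_Suc del: qpoch_def, simp add: qpoch_def)

lemma qp2_0: "(qp2 n :: 'a::field fps) $ 0 = 1"
  by (induction n) (simp_all add: qp2_Suc, simp add: qpoch_def)

lemma inv_step:
  fixes P P' E :: "'a::field fps"
  assumes "P' = P * E" "E $ 0 \<noteq> 0"
  shows "inverse P = E * inverse P'"
proof -
  have u: "E * inverse E = 1" by (rule inverse_mult_eq_1') (use assms in simp)
  have "E * inverse P' = E * (inverse P * inverse E)" by (simp only: assms(1) fps_inverse_mult)
  also have "\<dots> = inverse P * (E * inverse E)" by (rule mult.left_commute)
  finally show ?thesis using u by simp
qed

lemma qp1_inv: "inverse (qp1 n :: 'a::field fps) = (1 + fps_X ^ (2*n+1)) * inverse (qp1 (Suc n))"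
  by (rule inv_step[OF qp1_Suc]) simp

lemma qp2_inv: "inverse (qp2 n :: 'a::field fps) = (1 - fps_X ^ (2*n+2)) * inverse (qp2 (Suc n))"
  by (rule inv_step[OF qp2_Suc]) simp

definition ee :: "nat \<Rightarrow> nat \<Rightarrow> nat" where "ee j n = 2*n*n + 2*j*n - n"

lemma ee_plus: "ee j m + m = 2*m*m + 2*j*m"
proof -
  have "m \<le> 2*m*m" by (cases m) auto
  then show ?thesis unfolding ee_def by linarith
qed

lemma ee_Suc: "ee j (Suc m) = 2*m*m + 3*m + 1 + 2*j*m + 2*j"
  using ee_plus[of j "Suc m"] by (simp add: algebra_simps)

lemma ee_SS: "ee (Suc (Suc j)) m = 2*m*m + 2*j*m + 3*m"
  using ee_plus[of "Suc (Suc j)" m] by (simp add: algebra_simps)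

lemma ee_ge: "n \<le> ee j n"
  using ee_plus[of j n] by (cases n) (simp_all add: ee_Suc)

lemma ee_ge2: "0 < n \<Longrightarrow> 2*j+1 \<le> ee j n"
  by (cases n) (simp_all add: ee_Suc)

definition tt :: "'a::field \<Rightarrow> nat \<Rightarrow> nat \<Rightarrow> 'a fps" where
  "tt x j n = fps_const ((x^2 - 1)^n) * fps_X ^ (ee j n) / (qp2 n * qp1 (n + j))"

lemma tt_alt: "tt x j n = fps_X ^ (ee j n) * (fps_const ((x^2 - 1)^n) * inverse (qp2 n) * inverse (qp1 (n + j)))"
proof -
  have "(qp2 n * qp1 (n + j) :: 'a fps) $ 0 \<noteq> 0" by (simp add: qp1_0 qp2_0)
  then show ?thesis unfolding tt_def by (simp add: fps_divide_unit fps_inverse_mult ac_simps)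
qed

lemma tt_low: "k < ee j n \<Longrightarrow> tt x j n $ k = 0"
  unfolding tt_alt by (simp add: fps_X_power_mult_nth)

lemma tt_sums: "tt x j sums Abs_fps (\<lambda>k. \<Sum>n\<le>k. tt x j n $ k)"
  by (rule fps_sums_low, rule tt_low, erule less_le_trans, rule ee_ge)

lemma tt_rec: "tt x j n = (1 + fps_X ^ (2*j+1)) * tt x (Suc j) n +
   (case n of 0 \<Rightarrow> 0 | Suc m \<Rightarrow> fps_const (x^2 - 1) * fps_X ^ (2*j+1) * tt x (Suc (Suc j)) m)"
proof (cases n)
  case 0
  have "ee j 0 = 0" "ee (Suc j) 0 = 0" by (simp_all add: ee_def)
  then show ?thesis unfolding tt_alt using qp1_inv[of j] 0 by (simp add: qpoch_def)
next
  case (Suc m)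
  define XE where "XE = (fps_X :: 'a fps) ^ ee (Suc (Suc j)) m"
  define A where "A = (fps_X :: 'a fps) ^ (2*m+2)"
  define B where "B = (fps_X :: 'a fps) ^ (2*j+1)"
  define Q where "Q = inverse (qp2 (Suc m) :: 'a fps)"
  define K where "K = inverse (qp1 (m + Suc (Suc j)) :: 'a fps)"
  define c where "c = fps_const (x^2 - 1)"
  define Ym where "Ym = fps_const ((x^2 - 1)^m)"
  have n1: "ee j (Suc m) = (2*j+1) + ee (Suc (Suc j)) m" by (simp add: ee_Suc ee_SS)
  have n2: "ee (Suc j) (Suc m) = (2*m+2) + (2*j+1) + ee (Suc (Suc j)) m" by (simp add: ee_Suc ee_SS)
  have e1: "(fps_X :: 'a fps) ^ ee j (Suc m) = B * XE"
    unfolding B_def XE_def n1 power_add ..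
  have e2: "(fps_X :: 'a fps) ^ ee (Suc j) (Suc m) = A * B * XE"
    unfolding A_def B_def XE_def n2 power_add ..
  have n3: "2*(Suc m + j)+1 = (2*m+2) + (2*j+1)" "Suc (Suc m + j) = m + Suc (Suc j)" by simp_all
  have e3: "inverse (qp1 (Suc m + j) :: 'a fps) = (1 + A * B) * K"
    unfolding A_def B_def K_def using qp1_inv[of "Suc m + j"] unfolding n3 power_add .
  have n4: "Suc m + Suc j = m + Suc (Suc j)" by simp
  have e4: "inverse (qp1 (Suc m + Suc j) :: 'a fps) = K"
    unfolding K_def n4 ..
  have e5: "inverse (qp2 m :: 'a fps) = (1 - A) * Q"
    unfolding A_def Q_def using qp2_inv[of m] .
  have e6: "fps_const ((x^2 - 1)^Suc m) = c * Ym"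
    unfolding c_def Ym_def by simp
  have t1: "tt x j (Suc m) = B * XE * (c * Ym * Q * ((1 + A * B) * K))"
    unfolding tt_alt e1 e3 e6 Q_def ..
  have t2: "tt x (Suc j) (Suc m) = A * B * XE * (c * Ym * Q * K)"
    unfolding tt_alt e2 e4 e6 Q_def ..
  have t3: "tt x (Suc (Suc j)) m = XE * (Ym * ((1 - A) * Q) * K)"
    unfolding tt_alt XE_def[symmetric] e5 Ym_def[symmetric] K_def[symmetric] by (simp only: add.commute)
  have "tt x j (Suc m) = (1 + B) * tt x (Suc j) (Suc m) + c * B * tt x (Suc (Suc j)) m"
    unfolding t1 t2 t3 by algebra
  then show ?thesis using Suc unfolding c_def B_def by simp
qed


definition ss :: "'a::field \<Rightarrow> nat \<Rightarrow> 'a fps" where "ss x j = suminf (tt x j)"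

lemma ss_sums: "tt x j sums ss x j"
  unfolding ss_def using tt_sums sums_unique by metis

lemma ss_eq: "ss x j = Abs_fps (\<lambda>k. \<Sum>n\<le>k. tt x j n $ k)"
  using sums_unique2[OF ss_sums tt_sums] .

lemma ss_rec: "ss x j = (1 + fps_X ^ (2*j+1)) * ss x (Suc j) + fps_const (x^2 - 1) * fps_X ^ (2*j+1) * ss x (Suc (Suc j))"
proof -
  define C where "C = fps_const (x^2 - 1) * (fps_X :: 'a fps) ^ (2*j+1)"
  define B where "B = (\<lambda>n. case n of 0 \<Rightarrow> 0 | Suc m \<Rightarrow> C * tt x (Suc (Suc j)) m)"
  have A: "(\<lambda>n. (1 + fps_X ^ (2*j+1)) * tt x (Suc j) n) sums ((1 + fps_X ^ (2*j+1)) * ss x (Suc j))"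
    by (rule fps_sums_cmult[OF ss_sums])
  have "(\<lambda>n. B (Suc n)) sums (C * ss x (Suc (Suc j)))"
    unfolding B_def using fps_sums_cmult[OF ss_sums] by simp
  then have Bs: "B sums (C * ss x (Suc (Suc j)))"
    by (rule fps_sums_shift[rotated]) (simp add: B_def)
  have "tt x j = (\<lambda>n. (1 + fps_X ^ (2*j+1)) * tt x (Suc j) n + B n)"
    by (rule ext, subst tt_rec) (simp add: B_def C_def split: nat.split)
  then have "tt x j sums ((1 + fps_X ^ (2*j+1)) * ss x (Suc j) + C * ss x (Suc (Suc j)))"
    using fps_sums_add[OF A Bs] by simp
  then show ?thesis using sums_unique2[OF ss_sums] unfolding C_def by blast
qed

lemma qp1_stable: "j \<le> n \<Longrightarrow> k < 2*j+1 \<Longrightarrow> (qp1 n :: 'a::field fps) $ k = qp1 j $ k"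
proof (induction n rule: dec_induct)
  case (step n)
  have "(qp1 (Suc n) :: 'a fps) $ k = qp1 n $ k + (qp1 n * fps_X ^ (2*n+1)) $ k"
    by (simp only: qp1_Suc distrib_left mult_1_right fps_add_nth)
  also have "\<dots> = qp1 n $ k" using step by (simp only: fps_X_power_mult_right_nth) simp
  finally show ?case using step by simp
qed simp

definition PP :: "'a::field fps" where "PP = Abs_fps (\<lambda>k. qp1 (Suc k) $ k)"

lemma qp1_lim: "(\<lambda>n. qp1 n :: 'a::field fps) \<longlonglongrightarrow> PP"
proof (rule tendsto_fpsI)
  fix k
  show "eventually (\<lambda>n. (qp1 n :: 'a fps) $ k = PP $ k) sequentially"
    using eventually_ge_at_top[of "Suc k"]
    by eventually_elim (simp add: PP_def qp1_stable)
qed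

lemma qpoch_inf_eq: "qpoch_inf (- fps_X) (fps_X ^ 2) = (PP :: 'a::field fps)"
  unfolding qpoch_inf_def using qp1_lim by (rule limI)

lemma PP_low: "k < 2*j+1 \<Longrightarrow> (PP :: 'a::field fps) $ k = qp1 j $ k"
proof -
  assume k: "k < 2*j+1"
  have "(qp1 (max j (Suc k)) :: 'a fps) $ k = qp1 (Suc k) $ k" by (rule qp1_stable) auto
  then have "(PP :: 'a fps) $ k = qp1 (max j (Suc k)) $ k" unfolding PP_def by simp
  also have "\<dots> = qp1 j $ k" using k by (simp add: qp1_stable)
  finally show ?thesis .
qed

lemma coeff_mult_eq:
  assumes "\<And>i. i \<le> k \<Longrightarrow> a $ i = a' $ i" "\<And>i. i \<le> k \<Longrightarrow> b $ i = b' $ i"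
  shows "((a :: 'a::comm_ring_1 fps) * b) $ k = (a' * b') $ k"
  unfolding fps_mult_nth using assms by (intro sum.cong) auto

lemma ss_low: "k < 2*j+1 \<Longrightarrow> ss x j $ k = inverse (qp1 j) $ k"
proof -
  assume k: "k < 2*j+1"
  have "ss x j $ k = (\<Sum>n\<le>k. tt x j n $ k)" by (simp add: ss_eq)
  also have "\<dots> = (\<Sum>n\<in>{0}. tt x j n $ k)"
  proof (rule sum.mono_neutral_right)
    show "\<forall>i\<in>{..k} - {0}. tt x j i $ k = 0"
    proof
      fix i assume "i \<in> {..k} - {0}"
      then have "0 < i" by auto
      then have "2*j+1 \<le> ee j i" by (rule ee_ge2)
      then show "tt x j i $ k = 0" using k by (intro tt_low) linarith
    qed
  qed auto
  also have "\<dots> = tt x j 0 $ k" by simp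
  also have "tt x j 0 = inverse (qp1 j)" by (simp add: tt_alt ee_def qpoch_def)
  finally show ?thesis .
qed

lemma PPss_low: "k < 2*j+1 \<Longrightarrow> (PP * ss x j) $ k = (1 :: 'a::field fps) $ k"
proof -
  assume k: "k < 2*j+1"
  have "(PP * ss x j) $ k = (qp1 j * inverse (qp1 j)) $ k"
    by (rule coeff_mult_eq) (use k in \<open>auto simp: PP_low ss_low\<close>)
  also have "qp1 j * inverse (qp1 j) = (1 :: 'a fps)" by (rule inverse_mult_eq_1') (simp add: qp1_0)
  finally show ?thesis .
qed

lemma uniq:
  fixes u :: "nat \<Rightarrow> 'a::comm_ring_1 fps"
  assumes rec: "\<And>j. u j = (1 + fps_X^(2*j+1)) * u (Suc j) + fps_const c * fps_X^(2*j+1) * u (Suc (Suc j))"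
    and low: "\<And>j k. k < 2*j+1 \<Longrightarrow> u j $ k = 0"
  shows "u j = 0"
proof -
  have "\<forall>j. u j $ m = 0" for m
  proof (induction m rule: less_induct)
    case (less m)
    have step: "u j $ m = u (Suc j) $ m" for j
    proof -
      have z: "u i $ (m - (2*j+1)) = 0" if "2*j+1 \<le> m" for i using less.IH that by simp
      have "u j $ m = ((1 + fps_X^(2*j+1)) * u (Suc j)) $ m + (fps_const c * (fps_X^(2*j+1) * u (Suc (Suc j)))) $ m"
        by (subst rec) (simp add: mult.assoc)
      also have "\<dots> = u (Suc j) $ m"
        using z by (simp add: distrib_right fps_X_power_mult_nth del: power_Suc)
      finally show ?thesis .
    qed
    have "u j $ m = 0" if "m - j = d" for j d
      using that
    proof (induction d arbitrary: j)
      case 0 then show ?case using low[of m j] by simp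
    next
      case (Suc d)
      then have "m - Suc j = d" by simp
      then show ?case using Suc.IH[of "Suc j"] step[of j] by simp
    qed
    then show ?case by blast
  qed
  then show ?thesis by (simp add: fps_eq_iff)
qed


lemma hc_PP:
  fixes x :: "'a::field"
  shows "hc x j = PP * ss x j"
proof -
  define u where "u j = hc x j - PP * ss x j" for j
  have "u j = 0"
  proof (rule uniq[of u "x^2 - 1"])
    fix j
    define B where "B = (fps_X :: 'a fps) ^ (2*j+1)"
    define C where "C = fps_const (x^2 - 1)"
    have h1: "hc x j = (1 + B) * hc x (Suc j) + C * B * hc x (Suc (Suc j))"
      unfolding B_def C_def by (rule hc_rec)
    have s1: "ss x j = (1 + B) * ss x (Suc j) + C * B * ss x (Suc (Suc j))"
      unfolding B_def C_def by (rule ss_rec)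
    have "u j = ((1 + B) * hc x (Suc j) + C * B * hc x (Suc (Suc j))) - PP * ((1 + B) * ss x (Suc j) + C * B * ss x (Suc (Suc j)))"
      unfolding u_def by (simp only: h1 s1)
    also have "\<dots> = (1 + B) * u (Suc j) + C * B * u (Suc (Suc j))"
      unfolding u_def by (simp add: algebra_simps)
    finally show "u j = (1 + fps_X ^ (2 * j + 1)) * u (Suc j) + fps_const (x\<^sup>2 - 1) * fps_X ^ (2 * j + 1) * u (Suc (Suc j))"
      unfolding B_def C_def .
  next
    fix j k :: nat assume k: "k < 2*j+1"
    show "u j $ k = 0" unfolding u_def using hc_low[OF k, of x] PPss_low[OF k, of x] by simp
  qed
  then show ?thesis unfolding u_def by simp
qed

theorem theorem3p1:
  fixes x :: "'a::field_char_0"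
  assumes "x \<noteq> 0"
  shows "SC_gf x =
    qpoch_inf (- fps_X) (fps_X ^ 2) *
      (fps_const (1 - 1 / x) *
         (\<Sum>n. fps_const ((x ^ 2 - 1) ^ n) * fps_X ^ (2 * n ^ 2 + n) /
               (qpoch (fps_X ^ 2) (fps_X ^ 2) n * qpoch (- fps_X) (fps_X ^ 2) (n + 1)))
     + fps_const (1 / x) *
         (\<Sum>n. fps_const ((x ^ 2 - 1) ^ n) * fps_X ^ (2 * n ^ 2 - n) /
               (qpoch (fps_X ^ 2) (fps_X ^ 2) n * qpoch (- fps_X) (fps_X ^ 2) n)))"
proof -
  have e1: "2 * n ^ 2 + n = ee 1 n" for n using ee_plus[of 1 n] by (simp add: power2_eq_square)
  have e0: "2 * n ^ 2 - n = ee 0 n" for n using ee_plus[of 0 n] by (simp add: power2_eq_square)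
  have S1: "(\<lambda>n. fps_const ((x ^ 2 - 1) ^ n) * fps_X ^ (2 * n ^ 2 + n) /
               (qpoch (fps_X ^ 2) (fps_X ^ 2) n * qpoch (- fps_X) (fps_X ^ 2) (n + 1))) = tt x 1"
    by (rule ext) (simp only: tt_def e1)
  have S0: "(\<lambda>n. fps_const ((x ^ 2 - 1) ^ n) * fps_X ^ (2 * n ^ 2 - n) /
               (qpoch (fps_X ^ 2) (fps_X ^ 2) n * qpoch (- fps_X) (fps_X ^ 2) n)) = tt x 0"
    by (rule ext) (simp only: tt_def e0 add_0_right)
  have c: "fps_const (1 - 1 / x) = 1 - fps_const (1 / x)" by (metis fps_const_1_eq_1 fps_const_sub)
  show ?thesis
    unfolding S1 S0 ss_def[symmetric] qpoch_inf_eq SC_hc[OF assms] hc_PP c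
    by (simp add: algebra_simps)
qed


end
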